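(* Let $m$ be odd and $0\le r\le (m-1)/2$. Let $\mathcal{G}=\mathcal{G}(m,r)$ be the set of column vectors $\varphi_{P,b}$, indexed by $x\in\mathbb{F}_2^m$, given by $$\varphi_{P,b}(x)=i^{\,wt(d_P)+2wt(b)}\,i^{\,xPx^\top+2bx^\top},$$ where $b$ ranges over $\mathbb{F}_2^m$ and the binary symmetric matrix $P$ ranges over the Delsarte–Goethals set $DG(m,r)$. Then $\mathcal{G}$ is a group of order $2^{(r+2)m}$ under pointwise multiplication.
   Context: Here $i=\sqrt{-1}$. $DG(m,r)$ is the Delsarte–Goethals set: a binary vector space (over $\mathbb{F}_2$) of $2^{(r+1)m}$ binary symmetric $m\times m$ matrices such that the sum (difference) of any two distinct matrices in it has rank at least $m-2r$ over $\mathbb{F}_2$. For a binary matrix $P$, $d_P$ denotes its main diagonal (a binary vector), and $wt$ denotes Hamming weight (number of 1s). The exponents $xPx^\top+2bx^\top$ and $wt(d_P)+2wt(b)$ are computed in the integers modulo 4, viewing the binary entries as the integers 0 and 1. *)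

theory Defs
  imports "HOL-Analysis.Analysis" "HOL-Library.Z2" "HOL-Algebra.Group"
begin

definition bint :: "bit \<Rightarrow> int" where
  "bint a = (if a = 1 then 1 else 0)"

definition wt :: "bit^'n \<Rightarrow> nat" where
  "wt v = card {j. v $ j = 1}"

definition diag_vec :: "bit^'n^'n \<Rightarrow> bit^'n" where
  "diag_vec P = (\<chi> j. P $ j $ j)"

definition is_DG :: "nat \<Rightarrow> (bit^'n^'n) set \<Rightarrow> bool" where
  "is_DG r D \<longleftrightarrow>
     0 \<in> D \<and> (\<forall>P\<in>D. \<forall>Q\<in>D. P + Q \<in> D) \<and>
     (\<forall>P\<in>D. transpose P = P) \<and>
     card D = 2 ^ ((r + 1) * CARD('n)) \<and>
     (\<forall>P\<in>D. \<forall>Q\<in>D. P \<noteq> Q \<longrightarrow> rank (P + Q) \<ge> CARD('n) - 2 * r)"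

definition phi :: "bit^'n^'n \<Rightarrow> bit^'n \<Rightarrow> bit^'n \<Rightarrow> complex" where
  "phi P b x =
     \<i> ^ nat ((int (wt (diag_vec P)) + 2 * int (wt b)) mod 4) *
     \<i> ^ nat (((\<Sum>j\<in>UNIV. \<Sum>k\<in>UNIV. bint (x $ j) * bint (P $ j $ k) * bint (x $ k))
              + 2 * (\<Sum>j\<in>UNIV. bint (b $ j) * bint (x $ j))) mod 4)"

definition calG :: "(bit^'n^'n) set \<Rightarrow> (bit^'n \<Rightarrow> complex) set" where
  "calG D = {phi P b | P b. P \<in> D}"

definition pointwise_group ::
    "('a \<Rightarrow> complex) set \<Rightarrow> ('a \<Rightarrow> complex) monoid" where
  "pointwise_group G = \<lparr>carrier = G, mult = (\<lambda>f g x. f x * g x), one = (\<lambda>x. 1)\<rparr>"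

end

theory Submission imports Defs begin

lemma bit_cases2: "(a::bit) = 0 \<or> a = 1" by (cases a) auto

lemma UNIV_bit: "(UNIV :: bit set) = {0,1}" using bit_cases2 by auto
lemma CARD_bit: "CARD(bit) = 2" by (simp add: UNIV_bit)

lemma bint_01: "bint a = 0 \<or> bint a = 1" by (simp add: bint_def)

lemma bint_inj: "bint a = bint b \<Longrightarrow> a = b"
  using bit_cases2[of a] bit_cases2[of b] by (auto simp: bint_def)

lemma bint_add: "bint (a + b) = bint a + bint b - 2 * bint a * bint b"
  using bit_cases2[of a] bit_cases2[of b] by (auto simp: bint_def)

lemma bint_mult: "bint (a * b) = bint a * bint b"
  using bit_cases2[of a] bit_cases2[of b] by (auto simp: bint_def)

lemma bint_sq: "bint a * bint a = bint a"
  using bit_cases2[of a] by (auto simp: bint_def)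

lemma wt_sum: "int (wt (v::bit^'n)) = (\<Sum>j\<in>UNIV. bint (v $ j))"
proof -
  have "(\<Sum>j\<in>UNIV. bint (v $ j)) = (\<Sum>j\<in>UNIV. if v $ j = 1 then 1 else 0)"
    by (simp add: bint_def)
  also have "\<dots> = int (card {j. v $ j = 1})"
    by (simp add: sum.If_cases)
  finally show ?thesis by (simp add: wt_def)
qed

definition ii :: "int \<Rightarrow> complex" where "ii a = \<i> ^ nat (a mod 4)"

lemma i_pow_mod: "\<i> ^ n = \<i> ^ (n mod 4)"
proof -
  have "\<i> ^ n = \<i> ^ (4 * (n div 4) + n mod 4)" by (simp only: mult_div_mod_eq)
  also have "\<dots> = (\<i> ^ 4) ^ (n div 4) * \<i> ^ (n mod 4)"
    by (simp only: power_add power_mult)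
  also have "\<dots> = \<i> ^ (n mod 4)" by simp
  finally show ?thesis .
qed

lemma ii_add: "ii (a + b) = ii a * ii b"
proof -
  have "ii a * ii b = \<i> ^ (nat (a mod 4) + nat (b mod 4))"
    by (simp add: ii_def power_add)
  also have "\<dots> = \<i> ^ ((nat (a mod 4) + nat (b mod 4)) mod 4)" by (rule i_pow_mod)
  also have "(nat (a mod 4) + nat (b mod 4)) mod 4 = nat ((a + b) mod 4)"
  proof -
    have "int ((nat (a mod 4) + nat (b mod 4)) mod 4) = (a mod 4 + b mod 4) mod 4"
      by (simp add: zmod_int)
    also have "\<dots> = (a + b) mod 4" by (simp add: mod_add_eq)
    finally show ?thesis by linarith
  qed
  finally show ?thesis by (simp add: ii_def)
qed

lemma ii_cong: "a mod 4 = b mod 4 \<Longrightarrow> ii a = ii b" by (simp add: ii_def)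

lemma ii_nz: "ii a \<noteq> 0" by (simp add: ii_def)

lemma ii_zero: "ii 0 = 1" by (simp add: ii_def)

lemma ii_inj: assumes "ii a = ii b" shows "a mod 4 = b mod 4"
proof -
  have i4: "\<And>n. n < 4 \<Longrightarrow> n = 0 \<or> n = 1 \<or> n = 2 \<or> n = (3::nat)" by auto
  have "nat (a mod 4) < 4" "nat (b mod 4) < 4" by auto
  then have "nat (a mod 4) = nat (b mod 4)"
    using assms unfolding ii_def
    using i4[of "nat (a mod 4)"] i4[of "nat (b mod 4)"]
    by (auto simp: power2_eq_square power3_eq_cube complex_eq_iff)
  then show ?thesis by simp
qed

lemma ii_pow4: "ii a * ii a * ii a * ii a = 1"
proof -
  have "ii a * ii a * ii a * ii a = ii (4 * a)"
    by (simp add: ii_add[symmetric] algebra_simps)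
  also have "\<dots> = ii 0" by (rule ii_cong) simp
  finally show ?thesis by (simp add: ii_zero)
qed

lemma sym_sum:
  fixes f :: "'a \<Rightarrow> 'a \<Rightarrow> int"
  assumes "finite A" and "\<And>j k. f j k = f k j"
  shows "\<exists>K. (\<Sum>j\<in>A. \<Sum>k\<in>A. f j k) = (\<Sum>j\<in>A. f j j) + 2 * K"
  using assms(1)
proof (induction A rule: finite_induct)
  case empty then show ?case by simp
next
  case (insert a A)
  then obtain K where K: "(\<Sum>j\<in>A. \<Sum>k\<in>A. f j k) = (\<Sum>j\<in>A. f j j) + 2 * K" by blast
  have "(\<Sum>j\<in>insert a A. \<Sum>k\<in>insert a A. f j k)
      = f a a + (\<Sum>k\<in>A. f a k) + (\<Sum>j\<in>A. f j a) + (\<Sum>j\<in>A. \<Sum>k\<in>A. f j k)"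
    using insert by (simp add: sum.distrib)
  also have "(\<Sum>j\<in>A. f j a) = (\<Sum>k\<in>A. f a k)" using assms(2) by metis
  finally have "(\<Sum>j\<in>insert a A. \<Sum>k\<in>insert a A. f j k)
     = (\<Sum>j\<in>insert a A. f j j) + 2 * (K + (\<Sum>k\<in>A. f a k))"
    using K insert by simp
  then show ?case by blast
qed


definition QF :: "bit^'n^'n \<Rightarrow> bit^'n \<Rightarrow> bit^'n \<Rightarrow> int" where
  "QF P b x = (\<Sum>j\<in>UNIV. \<Sum>k\<in>UNIV. bint (x $ j) * bint (P $ j $ k) * bint (x $ k))
              + 2 * (\<Sum>j\<in>UNIV. bint (b $ j) * bint (x $ j))"

definition CF :: "bit^'n^'n \<Rightarrow> bit^'n \<Rightarrow> int" where
  "CF P b = int (wt (diag_vec P)) + 2 * int (wt b)"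

lemma phi_ii: "phi P b x = ii (CF P b) * ii (QF P b x)"
  by (simp add: phi_def ii_def QF_def CF_def)

definition dd :: "bit^'n^'n \<Rightarrow> bit^'n^'n \<Rightarrow> bit^'n" where
  "dd P Q = (\<chi> j. P $ j $ j * Q $ j $ j)"

lemma phi_mult:
  fixes P Q :: "bit^'n^'n"
  assumes sP: "transpose P = P" and sQ: "transpose Q = Q"
  shows "phi P b x * phi Q c x = phi (P + Q) (b + c + dd P Q) x"
proof -
  define b' where "b' = b + c + dd P Q"
  define X where "X j = bint (x $ j)" for j
  define p where "p j k = bint (P $ j $ k)" for j k
  define q where "q j k = bint (Q $ j $ k)" for j k
  define s where "s j k = bint ((P + Q) $ j $ k)" for j k
  define bb where "bb j = bint (b $ j)" for j
  define cc where "cc j = bint (c $ j)" for j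
  define bp where "bp j = bint (b' $ j)" for j
  define u where "u j = bb j * cc j + bint (b $ j + c $ j) * p j j * q j j" for j
  have s_eq: "s j k = p j k + q j k - 2 * (p j k * q j k)" for j k
    unfolding s_def p_def q_def vector_add_component bint_add by (simp add: algebra_simps)
  have bp_eq: "bp j = bb j + cc j + p j j * q j j - 2 * u j" for j
    unfolding bp_def b'_def dd_def bb_def cc_def p_def q_def u_def vector_add_component
      vec_lambda_beta bint_add bint_mult by (simp add: algebra_simps)
  have symp: "p j k = p k j" for j k
    using arg_cong[OF sP, of "\<lambda>M. M $ k $ j"] unfolding p_def by (simp add: transpose_def)
  have symq: "q j k = q k j" for j k
    using arg_cong[OF sQ, of "\<lambda>M. M $ k $ j"] unfolding q_def by (simp add: transpose_def)
  have XX: "X j * X j = X j" for j by (simp add: X_def bint_sq)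
  have wt_diag: "int (wt (diag_vec M)) = (\<Sum>j\<in>UNIV. bint (M $ j $ j))" for M :: "bit^'n^'n"
    unfolding wt_sum diag_vec_def by simp
  have CP: "CF P b = (\<Sum>j\<in>UNIV. p j j) + 2 * (\<Sum>j\<in>UNIV. bb j)"
    unfolding CF_def wt_sum by (simp add: diag_vec_def p_def bb_def)
  have CQ: "CF Q c = (\<Sum>j\<in>UNIV. q j j) + 2 * (\<Sum>j\<in>UNIV. cc j)"
    unfolding CF_def wt_sum by (simp add: diag_vec_def q_def cc_def)
  have CR: "CF (P + Q) b' = (\<Sum>j\<in>UNIV. s j j) + 2 * (\<Sum>j\<in>UNIV. bp j)"
    unfolding CF_def wt_sum by (simp add: diag_vec_def s_def bp_def)
  have QP: "QF P b x = (\<Sum>j\<in>UNIV. \<Sum>k\<in>UNIV. X j * p j k * X k) + 2 * (\<Sum>j\<in>UNIV. bb j * X j)"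
    by (simp add: QF_def X_def p_def bb_def)
  have QQ: "QF Q c x = (\<Sum>j\<in>UNIV. \<Sum>k\<in>UNIV. X j * q j k * X k) + 2 * (\<Sum>j\<in>UNIV. cc j * X j)"
    by (simp add: QF_def X_def q_def cc_def)
  have QR: "QF (P + Q) b' x = (\<Sum>j\<in>UNIV. \<Sum>k\<in>UNIV. X j * s j k * X k) + 2 * (\<Sum>j\<in>UNIV. bp j * X j)"
    by (simp add: QF_def X_def s_def bp_def)
  have h1: "(\<Sum>j\<in>UNIV. s j j) = (\<Sum>j\<in>UNIV. p j j) + (\<Sum>j\<in>UNIV. q j j) - 2 * (\<Sum>j\<in>UNIV. p j j * q j j)"
    by (simp add: s_eq sum.distrib sum_subtractf sum_distrib_left)
  have h2: "(\<Sum>j\<in>UNIV. bp j) = (\<Sum>j\<in>UNIV. bb j) + (\<Sum>j\<in>UNIV. cc j) + (\<Sum>j\<in>UNIV. p j j * q j j) - 2 * (\<Sum>j\<in>UNIV. u j)"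
    by (simp add: bp_eq sum.distrib sum_subtractf sum_distrib_left)
  have h3: "(\<Sum>j\<in>UNIV. \<Sum>k\<in>UNIV. X j * s j k * X k) = (\<Sum>j\<in>UNIV. \<Sum>k\<in>UNIV. X j * p j k * X k)
      + (\<Sum>j\<in>UNIV. \<Sum>k\<in>UNIV. X j * q j k * X k) - 2 * (\<Sum>j\<in>UNIV. \<Sum>k\<in>UNIV. X j * (p j k * q j k) * X k)"
    by (simp add: s_eq sum.distrib sum_subtractf sum_distrib_left algebra_simps)
  have h4: "(\<Sum>j\<in>UNIV. bp j * X j) = (\<Sum>j\<in>UNIV. bb j * X j) + (\<Sum>j\<in>UNIV. cc j * X j)
      + (\<Sum>j\<in>UNIV. p j j * q j j * X j) - 2 * (\<Sum>j\<in>UNIV. u j * X j)"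
    by (simp add: bp_eq sum.distrib sum_subtractf sum_distrib_left algebra_simps)
  obtain K where K: "(\<Sum>j\<in>UNIV. \<Sum>k\<in>UNIV. X j * (p j k * q j k) * X k)
      = (\<Sum>j\<in>UNIV. X j * (p j j * q j j) * X j) + 2 * K"
    using sym_sum[of "UNIV :: 'n set" "\<lambda>j k. X j * (p j k * q j k) * X k"] symp symq
    by (auto simp: algebra_simps)
  have h5: "(\<Sum>j\<in>UNIV. X j * (p j j * q j j) * X j) = (\<Sum>j\<in>UNIV. p j j * q j j * X j)"
  proof (rule sum.cong)
    fix j show "X j * (p j j * q j j) * X j = p j j * q j j * X j"
      using XX[of j] by (metis mult.assoc mult.commute)
  qed simp
  have diff: "(CF P b + QF P b x + CF Q c + QF Q c x) = (CF (P + Q) b' + QF (P + Q) b' x)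
      + 4 * ((\<Sum>j\<in>UNIV. u j) + (\<Sum>j\<in>UNIV. u j * X j) + K)"
    unfolding CP CQ CR QP QQ QR h1 h2 h3 h4 K h5 by (simp add: algebra_simps)
  have "phi P b x * phi Q c x = ii (CF P b + QF P b x + CF Q c + QF Q c x)"
    by (simp add: phi_ii ii_add)
  also have "\<dots> = ii (CF (P + Q) b' + QF (P + Q) b' x)"
    by (rule ii_cong) (unfold diff, presburger)
  also have "\<dots> = phi (P + Q) b' x" by (simp add: phi_ii ii_add)
  finally show ?thesis by (simp add: b'_def)
qed


definition eS :: "'n set \<Rightarrow> bit^'n" where "eS S = (\<chi> l. if l \<in> S then 1 else 0)"

lemma bint_eS: "bint (eS S $ l) = (if l \<in> S then 1 else 0)"
  by (simp add: eS_def bint_def)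

lemma sum_ind: "(\<Sum>l\<in>(UNIV::'n::finite set). (if l \<in> S then 1 else 0) * f l) = (\<Sum>l\<in>S. (f l::int))"
proof -
  have "(\<Sum>l\<in>(UNIV::'n set). (if l \<in> S then 1 else 0) * f l) = (\<Sum>l\<in>UNIV. if l \<in> S then f l else 0)"
    by (rule sum.cong) auto
  also have "\<dots> = (\<Sum>l\<in>S. f l)" by (simp add: sum.If_cases)
  finally show ?thesis .
qed

lemma QF_eS: "QF P b (eS S) = (\<Sum>l\<in>S. \<Sum>k\<in>S. bint (P $ l $ k)) + 2 * (\<Sum>l\<in>S. bint (b $ l))"
proof -
  have "(\<Sum>j\<in>UNIV. \<Sum>k\<in>UNIV. bint (eS S $ j) * bint (P $ j $ k) * bint (eS S $ k))
      = (\<Sum>j\<in>UNIV. (if j \<in> S then 1 else 0) * (\<Sum>k\<in>UNIV. (if k \<in> S then 1 else 0) * bint (P $ j $ k)))"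
    by (simp add: bint_eS sum_distrib_left algebra_simps)
  also have "\<dots> = (\<Sum>l\<in>S. \<Sum>k\<in>S. bint (P $ l $ k))" by (simp add: sum_ind)
  finally show ?thesis unfolding QF_def bint_eS
    by (simp add: mult.commute[of _ "if _ then _ else _"] sum_ind)
qed

lemma QF_0: "QF P b 0 = 0"
  by (simp add: QF_def bint_def)

lemma phi_inj:
  fixes P Q :: "bit^'n^'n"
  assumes sP: "transpose P = P" and sQ: "transpose Q = Q" and eq: "phi P b = phi Q c"
  shows "P = Q \<and> b = c"
proof -
  have c0: "ii (CF P b) = ii (CF Q c)"
    using fun_cong[OF eq, of 0] by (simp add: phi_ii QF_0 ii_zero)
  have qx: "QF P b x mod 4 = QF Q c x mod 4" for x
  proof -
    have "ii (CF P b) * ii (QF P b x) = ii (CF P b) * ii (QF Q c x)"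
      using fun_cong[OF eq, of x] c0 by (simp add: phi_ii)
    then have "ii (QF P b x) = ii (QF Q c x)" using ii_nz by simp
    then show ?thesis by (rule ii_inj)
  qed
  have symp: "P $ j $ k = P $ k $ j" for j k
    using arg_cong[OF sP, of "\<lambda>M. M $ k $ j"] by (simp add: transpose_def)
  have symq: "Q $ j $ k = Q $ k $ j" for j k
    using arg_cong[OF sQ, of "\<lambda>M. M $ k $ j"] by (simp add: transpose_def)
  have diag: "bint (P $ j $ j) = bint (Q $ j $ j) \<and> bint (b $ j) = bint (c $ j)" for j
  proof -
    have "(bint (P $ j $ j) + 2 * bint (b $ j)) mod 4 = (bint (Q $ j $ j) + 2 * bint (c $ j)) mod 4"
      using qx[of "eS {j}"] by (simp add: QF_eS)
    then show ?thesis
      using bint_01[of "P $ j $ j"] bint_01[of "Q $ j $ j"] bint_01[of "b $ j"] bint_01[of "c $ j"]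
      by auto
  qed
  have off: "bint (P $ j $ k) = bint (Q $ j $ k)" if "j \<noteq> k" for j k
  proof -
    have "(bint (P $ j $ j) + bint (P $ j $ k) + bint (P $ k $ j) + bint (P $ k $ k) + 2 * bint (b $ j) + 2 * bint (b $ k)) mod 4
        = (bint (Q $ j $ j) + bint (Q $ j $ k) + bint (Q $ k $ j) + bint (Q $ k $ k) + 2 * bint (c $ j) + 2 * bint (c $ k)) mod 4"
      using qx[of "eS {j, k}"] that by (simp add: QF_eS algebra_simps)
    then have "(bint (P $ j $ j) + bint (P $ k $ k) + 2 * bint (b $ j) + 2 * bint (b $ k) + 2 * bint (P $ j $ k)) mod 4
        = (bint (P $ j $ j) + bint (P $ k $ k) + 2 * bint (b $ j) + 2 * bint (b $ k) + 2 * bint (Q $ j $ k)) mod 4"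
      using diag[of j] diag[of k] symp[of k j] symq[of k j] by (simp add: algebra_simps)
    then show ?thesis
      using bint_01[of "P $ j $ k"] bint_01[of "Q $ j $ k"] by auto presburger+
  qed
  have "P = Q"
    unfolding vec_eq_iff
  proof (intro allI)
    fix j k
    show "P $ j $ k = Q $ j $ k"
      using diag[of j] off[of j k] by (cases "j = k") (auto intro: bint_inj)
  qed
  moreover have "b = c" unfolding vec_eq_iff using diag by (auto intro: bint_inj)
  ultimately show ?thesis by simp
qed


theorem propositionA1:
  fixes D :: "(bit^'n^'n) set" and r :: nat
  assumes "odd CARD('n)"
    and "r \<le> (CARD('n) - 1) div 2"
    and "is_DG r D"
  shows "group (pointwise_group (calG D)) \<and> card (calG D) = 2 ^ ((r + 2) * CARD('n))"
proof -
  have D0: "0 \<in> D" and Dadd: "\<And>P Q. P \<in> D \<Longrightarrow> Q \<in> D \<Longrightarrow> P + Q \<in> D"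
    and Dsym: "\<And>P. P \<in> D \<Longrightarrow> transpose P = P"
    and Dcard: "card D = 2 ^ ((r + 1) * CARD('n))"
    using assms(3) unfolding is_DG_def by auto
  have finD: "finite D" using Dcard card_ge_0_finite by force
  have closed: "(\<lambda>x. f x * g x) \<in> calG D" if fG: "f \<in> calG D" and gG: "g \<in> calG D" for f g
  proof -
    obtain P b where f: "f = phi P b" "P \<in> D" using fG unfolding calG_def by blast
    obtain Q c where g: "g = phi Q c" "Q \<in> D" using gG unfolding calG_def by blast
    have "(\<lambda>x. f x * g x) = phi (P + Q) (b + c + dd P Q)"
      using f g phi_mult[OF Dsym Dsym] by auto
    then show ?thesis unfolding calG_def using Dadd f g by blast
  qed
  have one1: "phi 0 0 x = 1" for x :: "bit^'n"
  proof -
    have "CF (0::bit^'n^'n) 0 = 0" by (simp add: CF_def wt_def diag_vec_def)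
    moreover have "QF (0::bit^'n^'n) 0 x = 0" by (simp add: QF_def bint_def)
    ultimately show ?thesis by (simp add: phi_ii ii_zero)
  qed
  have one: "(\<lambda>x. 1) = phi (0::bit^'n^'n) 0" using one1 by auto
  have one_in: "(\<lambda>x. 1) \<in> calG D" unfolding one calG_def using D0 by blast
  have pow4: "f x * f x * f x * f x = 1" if fG: "f \<in> calG D" for f x
  proof -
    obtain P b where f: "f = phi P b" using fG unfolding calG_def by blast
    have "f x = ii (CF P b + QF P b x)" by (simp add: f phi_ii ii_add)
    then show ?thesis using ii_pow4 by simp
  qed
  have grp: "group (pointwise_group (calG D))"
  proof (rule groupI)
    fix f g assume "f \<in> carrier (pointwise_group (calG D))" "g \<in> carrier (pointwise_group (calG D))"
    then show "f \<otimes>\<^bsub>pointwise_group (calG D)\<^esub> g \<in> carrier (pointwise_group (calG D))"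
      using closed by (simp add: pointwise_group_def)
  next
    show "\<one>\<^bsub>pointwise_group (calG D)\<^esub> \<in> carrier (pointwise_group (calG D))"
      using one_in by (simp add: pointwise_group_def)
  next
    fix f g h
    show "f \<otimes>\<^bsub>pointwise_group (calG D)\<^esub> g \<otimes>\<^bsub>pointwise_group (calG D)\<^esub> h =
          f \<otimes>\<^bsub>pointwise_group (calG D)\<^esub> (g \<otimes>\<^bsub>pointwise_group (calG D)\<^esub> h)"
      by (simp add: pointwise_group_def mult.assoc)
  next
    fix f
    show "\<one>\<^bsub>pointwise_group (calG D)\<^esub> \<otimes>\<^bsub>pointwise_group (calG D)\<^esub> f = f"
      by (simp add: pointwise_group_def)
  next
    fix f assume fG: "f \<in> carrier (pointwise_group (calG D))"
    then have f: "f \<in> calG D" by (simp add: pointwise_group_def)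
    define y where "y = (\<lambda>x. f x * f x * f x)"
    have "(\<lambda>x. f x * f x) \<in> calG D" using closed f by blast
    then have "y \<in> calG D" unfolding y_def using closed[of "\<lambda>x. f x * f x" f] f by blast
    moreover have "(\<lambda>x. y x * f x) = (\<lambda>x. 1)" using pow4[OF f] by (simp add: y_def)
    ultimately show "\<exists>y\<in>carrier (pointwise_group (calG D)). y \<otimes>\<^bsub>pointwise_group (calG D)\<^esub> f = \<one>\<^bsub>pointwise_group (calG D)\<^esub>"
      by (auto simp: pointwise_group_def)
  qed
  have img: "calG D = (\<lambda>(P, b). phi P b) ` (D \<times> UNIV)"
    unfolding calG_def by auto
  have inj: "inj_on (\<lambda>(P, b). phi P b) (D \<times> UNIV)"
    by (auto simp: inj_on_def dest: phi_inj[OF Dsym Dsym])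
  have "card (calG D) = card D * CARD(bit^'n)"
    unfolding img using card_image[OF inj] by (simp add: card_cartesian_product)
  also have "\<dots> = 2 ^ ((r + 2) * CARD('n))"
    by (simp add: Dcard CARD_bit power_add[symmetric] algebra_simps)
  finally show ?thesis using grp by simp
qed

end
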